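(* Let $G,H$ be groups, $\omega_G,\omega_H$ normalized 3-cocycles with values in $\mathbb F^\times$, and $\omega((g_1,h_1),(g_2,h_2),(g_3,h_3)):=\omega_G(g_1,g_2,g_3)\,\omega_H^{-1}(h_3^{-1},h_2^{-1},h_1^{-1})$. Fix a $G\times H$-set $X$. The assignments $\mathcal B(X,\Psi,\Phi,\Omega)\mapsto\mathcal M(X,\Gamma')$ and $\mathcal M(X,\Gamma)\mapsto\mathcal B(X,\tilde\Psi,\tilde\Phi,\tilde\Omega)$, where $$\Gamma'((g_1,h_1),(g_2,h_2),x)=\Psi(g_1,g_2,(h_2^{-1}h_1^{-1})\cdot x)\,\Phi(h_1,h_2,x)\,\Omega(g_1,h_2,h_1^{-1}\cdot x),$$ $$\tilde\Psi(g_1,g_2,x)=\Gamma((g_1,1),(g_2,1),x),\ \tilde\Phi(h_1,h_2,x)=\Gamma((1,h_1),(1,h_2),x),\ \tilde\Omega(g,h,x)=\Gamma((g,1),(1,h),x),$$ are well defined and mutually inverse bijections between the semisimple $(\mathrm{Vec}_G^{\omega_G},\mathrm{Vec}_H^{\omega_H})$-bimodule categories of the form $\mathcal B(X,\Psi,\Phi,\Omega)$ and the semisimple $\mathrm{Vec}_{G\times H}^\omega$-module categories of the form $\mathcal M(X,\Gamma)$.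
   Context: $\mathbb F$ algebraically closed; $\mathrm{Vec}_K^\eta$ as usual (finite-dimensional $K$-graded spaces, $\delta^k\otimes\delta^{k'}=\delta^{kk'}$, associator $\eta$). In the $G\times H$-set $X$ write $g\cdot x=(g,1)\cdot x$ and $h\cdot x=(1,h)\cdot x$. The data $\mathcal B(X,\Psi,\Phi,\Omega)$: normalized maps $\Psi:G\times G\times X\to\mathbb F^\times$, $\Phi:H\times H\times X\to\mathbb F^\times$, $\Omega:G\times H\times X\to\mathbb F^\times$ with $\Psi(g_2,g_3,g_1^{-1}\cdot x)\Psi^{-1}(g_1g_2,g_3,x)\Psi(g_1,g_2g_3,x)\Psi^{-1}(g_1,g_2,x)=\omega_G^{-1}(g_1,g_2,g_3)$; $\Phi(h_2,h_3,h_1^{-1}\cdot x)\Phi^{-1}(h_1h_2,h_3,x)\Phi(h_1,h_2h_3,x)\Phi^{-1}(h_1,h_2,x)=\omega_H(h_3^{-1},h_2^{-1},h_1^{-1})$; $\Omega(g_2,h,g_1^{-1}\cdot x)\Omega^{-1}(g_1g_2,h,x)\Omega(g_1,h,x)=\Psi(g_1,g_2,x)\Psi^{-1}(g_1,g_2,h^{-1}\cdot x)$; $\Omega(g,h_2,h_1^{-1}\cdot x)\Omega^{-1}(g,h_1h_2,x)\Omega(g,h_1,x)=\Phi^{-1}(h_1,h_2,x)\Phi(h_1,h_2,g^{-1}\cdot x)$. The bimodule category $\mathcal B(X,\Psi,\Phi,\Omega)$ is the category of finite-dimensional $X$-graded spaces with $\delta^g\triangleright x=g\cdot x$, $x\triangleleft\delta^h=h^{-1}\cdot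 x$, left constraint $m_{g_1,g_2,x}=\Psi(g_1,g_2,(g_1g_2)\cdot x)\mathrm{id}$, right constraint $n_{x,h_1,h_2}=\Phi(h_2^{-1},h_1^{-1},(h_1h_2)^{-1}\cdot x)\mathrm{id}:x\triangleleft(\delta^{h_1}\otimes\delta^{h_2})\to(x\triangleleft\delta^{h_1})\triangleleft\delta^{h_2}$, and middle constraint $b_{g,x,h}=\Omega(g,h^{-1},(g,h^{-1})\cdot x)\mathrm{id}:(\delta^g\triangleright x)\triangleleft\delta^h\to\delta^g\triangleright(x\triangleleft\delta^h)$. The data $\mathcal M(X,\Gamma)$: normalized $\Gamma:(G\times H)^2\times X\to\mathbb F^\times$ with $\Gamma(u_2,u_3,u_1^{-1}\cdot x)\Gamma^{-1}(u_1u_2,u_3,x)\Gamma(u_1,u_2u_3,x)\Gamma^{-1}(u_1,u_2,x)=\omega^{-1}(u_1,u_2,u_3)$ and additionally $\Gamma((1,h),(g,1),x)=1$ for all $g,h,x$; $\mathcal M(X,\Gamma)$ is the $\mathrm{Vec}_{G\times H}^\omega$-module category of $X$-graded spaces with $\delta^u\triangleright x=u\cdot x$ and constraint $\Gamma(u,v,(uv)\cdot x)\mathrm{id}$. *)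

theory Defs
  imports "HOL-Computational_Algebra.Polynomial"
begin

class mgroup = times + one + inverse +
  assumes mg_assoc: "(a * b) * c = a * (b * c)"
    and mg_left_one: "1 * a = a"
    and mg_left_inv: "inverse a * a = 1"

definition pmul :: "'g::mgroup \<times> 'h::mgroup \<Rightarrow> 'g \<times> 'h \<Rightarrow> 'g \<times> 'h" where
  "pmul u v = (fst u * fst v, snd u * snd v)"
definition pone :: "'g::mgroup \<times> 'h::mgroup" where
  "pone = (1, 1)"
definition pinv :: "'g::mgroup \<times> 'h::mgroup \<Rightarrow> 'g \<times> 'h" where
  "pinv u = (inverse (fst u), inverse (snd u))"

definition is_GH_set :: "('g::mgroup \<times> 'h::mgroup \<Rightarrow> 'x \<Rightarrow> 'x) \<Rightarrow> bool" where
  "is_GH_set act \<longleftrightarrow> (\<forall>x. act pone x = x) \<and> (\<forall>u v x. act (pmul u v) x = act u (act v x))"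

definition normalized_3cocycle :: "('g::mgroup \<Rightarrow> 'g \<Rightarrow> 'g \<Rightarrow> 'k::field) \<Rightarrow> bool" where
  "normalized_3cocycle w \<longleftrightarrow>
     (\<forall>a b c. w a b c \<noteq> 0) \<and>
     (\<forall>a b. w 1 a b = 1 \<and> w a 1 b = 1 \<and> w a b 1 = 1) \<and>
     (\<forall>a b c d. w b c d * w a (b * c) d * w a b c = w (a * b) c d * w a b (c * d))"

definition omega_prod :: "('g::mgroup \<Rightarrow> 'g \<Rightarrow> 'g \<Rightarrow> 'k::field) \<Rightarrow> ('h::mgroup \<Rightarrow> 'h \<Rightarrow> 'h \<Rightarrow> 'k)
    \<Rightarrow> 'g \<times> 'h \<Rightarrow> 'g \<times> 'h \<Rightarrow> 'g \<times> 'h \<Rightarrow> 'k" where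
  "omega_prod wG wH u1 u2 u3 =
     wG (fst u1) (fst u2) (fst u3) * inverse (wH (inverse (snd u3)) (inverse (snd u2)) (inverse (snd u1)))"

text \<open>Data B(X,Psi,Phi,Omega). Notation: g.x = act (g,1) x, h.x = act (1,h) x.\<close>
definition is_B_data ::
  "('g::mgroup \<Rightarrow> 'g \<Rightarrow> 'g \<Rightarrow> 'k::field) \<Rightarrow> ('h::mgroup \<Rightarrow> 'h \<Rightarrow> 'h \<Rightarrow> 'k) \<Rightarrow> ('g \<times> 'h \<Rightarrow> 'x \<Rightarrow> 'x)
   \<Rightarrow> ('g \<Rightarrow> 'g \<Rightarrow> 'x \<Rightarrow> 'k) \<Rightarrow> ('h \<Rightarrow> 'h \<Rightarrow> 'x \<Rightarrow> 'k) \<Rightarrow> ('g \<Rightarrow> 'h \<Rightarrow> 'x \<Rightarrow> 'k) \<Rightarrow> bool" where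
  "is_B_data wG wH act Psi Phi Omega \<longleftrightarrow>
     (\<forall>a b x. Psi a b x \<noteq> 0) \<and> (\<forall>a b x. Phi a b x \<noteq> 0) \<and> (\<forall>a b x. Omega a b x \<noteq> 0) \<and>
     (\<forall>g x. Psi 1 g x = 1 \<and> Psi g 1 x = 1) \<and>
     (\<forall>h x. Phi 1 h x = 1 \<and> Phi h 1 x = 1) \<and>
     (\<forall>g h x. Omega 1 h x = 1 \<and> Omega g 1 x = 1) \<and>
     (\<forall>g1 g2 g3 x.
        Psi g2 g3 (act (inverse g1, 1) x) * inverse (Psi (g1 * g2) g3 x) * Psi g1 (g2 * g3) x
          * inverse (Psi g1 g2 x) = inverse (wG g1 g2 g3)) \<and>
     (\<forall>h1 h2 h3 x.
        Phi h2 h3 (act (1, inverse h1) x) * inverse (Phi (h1 * h2) h3 x) * Phi h1 (h2 * h3) x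
          * inverse (Phi h1 h2 x) = wH (inverse h3) (inverse h2) (inverse h1)) \<and>
     (\<forall>g1 g2 h x.
        Omega g2 h (act (inverse g1, 1) x) * inverse (Omega (g1 * g2) h x) * Omega g1 h x
          = Psi g1 g2 x * inverse (Psi g1 g2 (act (1, inverse h) x))) \<and>
     (\<forall>g h1 h2 x.
        Omega g h2 (act (1, inverse h1) x) * inverse (Omega g (h1 * h2) x) * Omega g h1 x
          = inverse (Phi h1 h2 x) * Phi h1 h2 (act (inverse g, 1) x))"

definition is_M_data ::
  "('g::mgroup \<times> 'h::mgroup \<Rightarrow> 'g \<times> 'h \<Rightarrow> 'g \<times> 'h \<Rightarrow> 'k::field) \<Rightarrow> ('g \<times> 'h \<Rightarrow> 'x \<Rightarrow> 'x)
   \<Rightarrow> ('g \<times> 'h \<Rightarrow> 'g \<times> 'h \<Rightarrow> 'x \<Rightarrow> 'k) \<Rightarrow> bool" where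
  "is_M_data w act Gamma \<longleftrightarrow>
     (\<forall>u v x. Gamma u v x \<noteq> 0) \<and>
     (\<forall>u x. Gamma pone u x = 1 \<and> Gamma u pone x = 1) \<and>
     (\<forall>u1 u2 u3 x.
        Gamma u2 u3 (act (pinv u1) x) * inverse (Gamma (pmul u1 u2) u3 x) * Gamma u1 (pmul u2 u3) x
          * inverse (Gamma u1 u2 x) = inverse (w u1 u2 u3)) \<and>
     (\<forall>g h x. Gamma (1, h) (g, 1) x = 1)"

definition Gamma_of :: "('g::mgroup \<times> 'h::mgroup \<Rightarrow> 'x \<Rightarrow> 'x)
   \<Rightarrow> ('g \<Rightarrow> 'g \<Rightarrow> 'x \<Rightarrow> 'k::field) \<Rightarrow> ('h \<Rightarrow> 'h \<Rightarrow> 'x \<Rightarrow> 'k) \<Rightarrow> ('g \<Rightarrow> 'h \<Rightarrow> 'x \<Rightarrow> 'k)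
   \<Rightarrow> 'g \<times> 'h \<Rightarrow> 'g \<times> 'h \<Rightarrow> 'x \<Rightarrow> 'k" where
  "Gamma_of act Psi Phi Omega u1 u2 x =
     Psi (fst u1) (fst u2) (act (1, inverse (snd u2) * inverse (snd u1)) x)
     * Phi (snd u1) (snd u2) x
     * Omega (fst u1) (snd u2) (act (1, inverse (snd u1)) x)"

definition Psi_of :: "('g::mgroup \<times> 'h::mgroup \<Rightarrow> 'g \<times> 'h \<Rightarrow> 'x \<Rightarrow> 'k) \<Rightarrow> 'g \<Rightarrow> 'g \<Rightarrow> 'x \<Rightarrow> 'k" where
  "Psi_of Gamma g1 g2 x = Gamma (g1, 1) (g2, 1) x"
definition Phi_of :: "('g::mgroup \<times> 'h::mgroup \<Rightarrow> 'g \<times> 'h \<Rightarrow> 'x \<Rightarrow> 'k) \<Rightarrow> 'h \<Rightarrow> 'h \<Rightarrow> 'x \<Rightarrow> 'k" where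
  "Phi_of Gamma h1 h2 x = Gamma (1, h1) (1, h2) x"
definition Omega_of :: "('g::mgroup \<times> 'h::mgroup \<Rightarrow> 'g \<times> 'h \<Rightarrow> 'x \<Rightarrow> 'k) \<Rightarrow> 'g \<Rightarrow> 'h \<Rightarrow> 'x \<Rightarrow> 'k" where
  "Omega_of Gamma g h x = Gamma (g, 1) (1, h) x"

end

theory Submission
  imports Defs
begin

context mgroup
begin
lemma mg_right_inv: "a * inverse a = 1"
proof -
  have "a * inverse a = 1 * (a * inverse a)" by (simp add: mg_left_one)
  also have "... = (inverse (inverse a) * inverse a) * (a * inverse a)" by (simp add: mg_left_inv)
  also have "... = inverse (inverse a) * ((inverse a * a) * inverse a)" by (simp add: mg_assoc)
  also have "... = 1" by (simp add: mg_left_inv mg_left_one)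
  finally show ?thesis .
qed
lemma mg_right_one: "a * 1 = a"
  by (metis mg_assoc mg_left_inv mg_left_one mg_right_inv)
lemma mg_inv_one: "inverse 1 = 1"
  by (metis mg_left_inv mg_right_one)
lemma mg_left_inv_assoc: "inverse a * (a * b) = b"
  by (metis mg_assoc mg_left_inv mg_left_one)
lemma mg_right_inv_assoc: "a * (inverse a * b) = b"
  by (metis mg_assoc mg_right_inv mg_left_one)
lemma mg_inv_inv: "inverse (inverse a) = a"
  by (metis mg_left_inv mg_right_inv_assoc mg_right_one)
lemma mg_inv_mult: "inverse (a * b) = inverse b * inverse a"
proof -
  have "(a * b) * (inverse b * inverse a) = 1"
    by (simp add: mg_assoc mg_right_inv_assoc mg_right_inv)
  then show ?thesis
    by (metis mg_assoc mg_left_inv mg_left_one mg_right_one)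
qed
end

lemmas gsimps = mg_assoc mg_left_one mg_right_one mg_left_inv mg_right_inv mg_inv_one
  mg_left_inv_assoc mg_right_inv_assoc mg_inv_inv mg_inv_mult

lemma act_comp: "is_GH_set act \<Longrightarrow> act u (act v x) = act (pmul u v) x"
  unfolding is_GH_set_def by metis
lemma act_one: "is_GH_set act \<Longrightarrow> act (1, 1) x = x"
  unfolding is_GH_set_def pone_def by simp

lemmas psimps = pmul_def pinv_def pone_def

lemma M_coc:
  assumes "is_M_data w act Gamma" "\<And>a b c. w a b c \<noteq> 0"
  shows "Gamma u2 u3 (act (pinv u1) x) * Gamma u1 (pmul u2 u3) x * w u1 u2 u3
       = Gamma (pmul u1 u2) u3 x * Gamma u1 u2 x"
proof -
  from assms(1) have nz: "\<And>u v x. Gamma u v x \<noteq> 0" and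
   E: "Gamma u2 u3 (act (pinv u1) x) * inverse (Gamma (pmul u1 u2) u3 x) * Gamma u1 (pmul u2 u3) x
          * inverse (Gamma u1 u2 x) = inverse (w u1 u2 u3)"
    unfolding is_M_data_def by blast+
  from E assms(2) nz show ?thesis by (simp add: field_simps)
qed

lemma omega_nz: "normalized_3cocycle wG \<Longrightarrow> normalized_3cocycle wH \<Longrightarrow> (\<And>u v w. omega_prod wG wH u v w \<noteq> 0)"
  unfolding omega_prod_def normalized_3cocycle_def by simp

lemma part4:
  fixes Gamma :: "'g::mgroup \<times> 'h::mgroup \<Rightarrow> 'g \<times> 'h \<Rightarrow> 'x \<Rightarrow> 'k::field"
  assumes cG: "normalized_3cocycle wG" and cH: "normalized_3cocycle wH" and A: "is_GH_set act"
    and M: "is_M_data (omega_prod wG wH) act Gamma"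
  shows "Gamma_of act (Psi_of Gamma) (Phi_of Gamma) (Omega_of Gamma) = Gamma"
proof (intro ext)
  fix u v :: "'g \<times> 'h" and x
  obtain g1 h1 where u: "u = (g1, h1)" by fastforce
  obtain g2 h2 where v: "v = (g2, h2)" by fastforce
  have N: "\<And>u x. Gamma (1,1) u x = 1" "\<And>u x. Gamma u (1,1) x = 1" "\<And>g h x. Gamma (1, h) (g, 1) x = 1"
    using M unfolding is_M_data_def pone_def by auto
  have wn: "\<And>a b. wG 1 a b = 1" "\<And>a b. wG a 1 b = 1" "\<And>a b. wG a b 1 = 1"
     "\<And>a b. wH 1 a b = 1" "\<And>a b. wH a 1 b = 1" "\<And>a b. wH a b 1 = 1"
    using cG cH unfolding normalized_3cocycle_def by auto
  note S = N wn omega_prod_def psimps gsimps act_comp[OF A] act_one[OF A]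
  have C: "\<And>u1 u2 u3 x. omega_prod wG wH u1 u2 u3 * (Gamma u2 u3 (act (pinv u1) x) * Gamma u1 (pmul u2 u3) x)
       = Gamma (pmul u1 u2) u3 x * Gamma u1 u2 x"
    using M_coc[OF M omega_nz[OF cG cH]] by (simp add: ac_simps)
  define y where "y = act (1, inverse h1) x"
  have e1: "Gamma (g1,1) (g2,h2) y * Gamma (1,h1) (g1*g2,h2) x = Gamma (g1,h1) (g2,h2) x"
    using C[of "(1,h1)" "(g1,1)" "(g2,h2)" x] by (simp add: S y_def)
  have e2: "Gamma (g1,1) (g2,h2) y = Gamma (g1,h2) (g2,1) y * Gamma (g1,1) (1,h2) y"
    using C[of "(g1,1)" "(1,h2)" "(g2,1)" y] by (simp add: S)
  have e3: "Gamma (g1,1) (g2,1) (act (1, inverse h2) y) = Gamma (g1,h2) (g2,1) y"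
    using C[of "(1,h2)" "(g1,1)" "(g2,1)" y] by (simp add: S)
  have e4: "Gamma (1,h1) (g1*g2,h2) x = Gamma (1,h1) (1,h2) x"
    using C[of "(1,h1)" "(1,h2)" "(g1*g2,1)" x] by (simp add: S)
  have "Gamma_of act (Psi_of Gamma) (Phi_of Gamma) (Omega_of Gamma) u v x
     = Gamma (g1,1) (g2,1) (act (1, inverse h2) y) * Gamma (1,h1) (1,h2) x * Gamma (g1,1) (1,h2) y"
    unfolding Gamma_of_def Psi_of_def Phi_of_def Omega_of_def u v y_def by (simp add: S)
  also have "... = Gamma u v x" using e1 e2 e3 e4 u v by (simp add: ac_simps)
  finally show "Gamma_of act (Psi_of Gamma) (Phi_of Gamma) (Omega_of Gamma) u v x = Gamma u v x" .
qed



lemma part2: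
  fixes Gamma :: "'g::mgroup \<times> 'h::mgroup \<Rightarrow> 'g \<times> 'h \<Rightarrow> 'x \<Rightarrow> 'k::field"
  assumes cG: "normalized_3cocycle wG" and cH: "normalized_3cocycle wH" and A: "is_GH_set act"
    and M: "is_M_data (omega_prod wG wH) act Gamma"
  shows "is_B_data wG wH act (Psi_of Gamma) (Phi_of Gamma) (Omega_of Gamma)"
proof -
  have nz: "\<And>u v x. Gamma u v x \<noteq> 0" using M unfolding is_M_data_def by blast
  have N: "\<And>u x. Gamma (1,1) u x = 1" "\<And>u x. Gamma u (1,1) x = 1" "\<And>g h x. Gamma (1, h) (g, 1) x = 1"
    using M unfolding is_M_data_def pone_def by auto
  have E: "\<And>u1 u2 u3 x. inverse (omega_prod wG wH u1 u2 u3) = Gamma u2 u3 (act (pinv u1) x) * inverse (Gamma (pmul u1 u2) u3 x) * Gamma u1 (pmul u2 u3) x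
          * inverse (Gamma u1 u2 x)"
    using M unfolding is_M_data_def by metis
  have wn: "\<And>a b. wG 1 a b = 1" "\<And>a b. wG a 1 b = 1" "\<And>a b. wG a b 1 = 1"
     "\<And>a b. wH 1 a b = 1" "\<And>a b. wH a 1 b = 1" "\<And>a b. wH a b 1 = 1"
    using cG cH unfolding normalized_3cocycle_def by auto
  note S = N wn omega_prod_def psimps gsimps act_comp[OF A] act_one[OF A]
  have C: "\<And>u1 u2 u3 x. omega_prod wG wH u1 u2 u3 * (Gamma u2 u3 (act (pinv u1) x) * Gamma u1 (pmul u2 u3) x)
       = Gamma (pmul u1 u2) u3 x * Gamma u1 u2 x"
    using M_coc[OF M omega_nz[OF cG cH]] by (simp add: ac_simps)
  have P1: "Psi_of Gamma g2 g3 (act (inverse g1, 1) x) * inverse (Psi_of Gamma (g1 * g2) g3 x) * Psi_of Gamma g1 (g2 * g3) x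
          * inverse (Psi_of Gamma g1 g2 x) = inverse (wG g1 g2 g3)" for g1 g2 g3 x
    using E[of "(g1,1)" "(g2,1)" "(g3,1)" x, symmetric] unfolding Psi_of_def by (simp add: S)
  have P2: "Phi_of Gamma h2 h3 (act (1, inverse h1) x) * inverse (Phi_of Gamma (h1 * h2) h3 x) * Phi_of Gamma h1 (h2 * h3) x
          * inverse (Phi_of Gamma h1 h2 x) = wH (inverse h3) (inverse h2) (inverse h1)" for h1 h2 h3 x
    using E[of "(1,h1)" "(1,h2)" "(1,h3)" x, symmetric] unfolding Phi_of_def by (simp add: S)
  have P3: "Omega_of Gamma g2 h (act (inverse g1, 1) x) * inverse (Omega_of Gamma (g1 * g2) h x) * Omega_of Gamma g1 h x
          = Psi_of Gamma g1 g2 x * inverse (Psi_of Gamma g1 g2 (act (1, inverse h) x))" for g1 g2 h x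
  proof -
    have a1: "Gamma (g2,1) (1,h) (act (inverse g1, 1) x) * Gamma (g1,1) (g2,h) x = Gamma (g1*g2,1) (1,h) x * Gamma (g1,1) (g2,1) x"
      using C[of "(g1,1)" "(g2,1)" "(1,h)" x] by (simp add: S)
    have a2: "Gamma (g1,1) (g2,h) x = Gamma (g1,h) (g2,1) x * Gamma (g1,1) (1,h) x"
      using C[of "(g1,1)" "(1,h)" "(g2,1)" x] by (simp add: S)
    have a3: "Gamma (g1,1) (g2,1) (act (1, inverse h) x) = Gamma (g1,h) (g2,1) x"
      using C[of "(1,h)" "(g1,1)" "(g2,1)" x] by (simp add: S)
    show ?thesis using a1 a2 a3 nz unfolding Omega_of_def Psi_of_def by (simp add: field_simps)
  qed
  have P4: "Omega_of Gamma g h2 (act (1, inverse h1) x) * inverse (Omega_of Gamma g (h1 * h2) x) * Omega_of Gamma g h1 x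
          = inverse (Phi_of Gamma h1 h2 x) * Phi_of Gamma h1 h2 (act (inverse g, 1) x)" for g h1 h2 x
  proof -
    have a1: "Gamma (g,1) (1,h2) (act (1, inverse h1) x) * Gamma (1,h1) (g,h2) x = Gamma (g,h1) (1,h2) x"
      using C[of "(1,h1)" "(g,1)" "(1,h2)" x] by (simp add: S)
    have a2: "Gamma (1,h1) (g,h2) x = Gamma (1,h1) (1,h2) x"
      using C[of "(1,h1)" "(1,h2)" "(g,1)" x] by (simp add: S)
    have a3: "Gamma (1,h1) (1,h2) (act (inverse g, 1) x) * Gamma (g,1) (1,h1*h2) x = Gamma (g,h1) (1,h2) x * Gamma (g,1) (1,h1) x"
      using C[of "(g,1)" "(1,h1)" "(1,h2)" x] by (simp add: S)
    show ?thesis using a1 a2 a3 nz unfolding Omega_of_def Phi_of_def by (simp add: field_simps)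
  qed
  show ?thesis unfolding is_B_data_def
    using P1 P2 P3 P4 nz N by (simp add: Psi_of_def Phi_of_def Omega_of_def)
qed

lemma part3:
  assumes A: "is_GH_set act" and B: "is_B_data wG wH act Psi Phi Omega"
  shows "Psi_of (Gamma_of act Psi Phi Omega) = Psi
              \<and> Phi_of (Gamma_of act Psi Phi Omega) = Phi
              \<and> Omega_of (Gamma_of act Psi Phi Omega) = Omega"
  using B A unfolding is_B_data_def
  by (auto intro!: ext simp: Psi_of_def Phi_of_def Omega_of_def Gamma_of_def gsimps act_one)


lemma field_aux:
  fixes W P123 Pa Pg P12_3 F F1_23 F12 F12_3 V O13 Ob Pz O12_3 O12 O1_23 Fb :: "'k::field"
  assumes h1: "W*P123*Pa = Pg*P12_3" and h2: "F*F1_23 = F12*F12_3*V"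
    and h3: "O13*Pg*Ob = Pz*O12_3" and h4: "O12*O13*F = O1_23*Fb"
    and nz: "Pg \<noteq> 0" "O13 \<noteq> 0" "F \<noteq> 0"
  shows "W*O1_23*F1_23*P123*Fb*Ob*Pa = O12*F12*Pz*O12_3*F12_3*P12_3*V"
proof -
  have "(W*O1_23*F1_23*P123*Fb*Ob*Pa) * (Pg*O13*F) = (W*P123*Pa) * (O1_23*Fb) * (F*F1_23) * (O13*Pg*Ob)"
    by (simp add: ac_simps)
  also have "... = (Pg*P12_3) * (O12*O13*F) * (F12*F12_3*V) * (Pz*O12_3)" by (simp only: h1 h2 h3 h4)
  also have "... = (O12*F12*Pz*O12_3*F12_3*P12_3*V) * (Pg*O13*F)" by (simp add: ac_simps)
  finally show ?thesis using nz by simp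
qed

lemma part1:
  fixes Psi :: "'g::mgroup \<Rightarrow> 'g \<Rightarrow> 'x \<Rightarrow> 'k::field" and Phi :: "'h::mgroup \<Rightarrow> 'h \<Rightarrow> 'x \<Rightarrow> 'k"
  assumes cG: "normalized_3cocycle wG" and cH: "normalized_3cocycle wH" and A: "is_GH_set act"
    and B: "is_B_data wG wH act Psi Phi Omega"
  shows "is_M_data (omega_prod wG wH) act (Gamma_of act Psi Phi Omega)"
proof -
  have nzs: "\<And>a b x. Psi a b x \<noteq> 0" "\<And>a b x. Phi a b x \<noteq> 0" "\<And>a b x. Omega a b x \<noteq> 0"
    and N: "\<And>g x. Psi 1 g x = 1" "\<And>g x. Psi g 1 x = 1" "\<And>g x. Phi 1 g x = 1" "\<And>g x. Phi g 1 x = 1"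
       "\<And>g x. Omega 1 g x = 1" "\<And>g x. Omega g 1 x = 1"
    using B unfolding is_B_data_def by auto
  have B1: "\<forall>g1 g2 g3 x.
        Psi g2 g3 (act (inverse g1, 1) x) * inverse (Psi (g1 * g2) g3 x) * Psi g1 (g2 * g3) x
          * inverse (Psi g1 g2 x) = inverse (wG g1 g2 g3)"
   and B2: "\<forall>h1 h2 h3 x.
        Phi h2 h3 (act (1, inverse h1) x) * inverse (Phi (h1 * h2) h3 x) * Phi h1 (h2 * h3) x
          * inverse (Phi h1 h2 x) = wH (inverse h3) (inverse h2) (inverse h1)"
   and B3: "\<forall>g1 g2 h x.
        Omega g2 h (act (inverse g1, 1) x) * inverse (Omega (g1 * g2) h x) * Omega g1 h x
          = Psi g1 g2 x * inverse (Psi g1 g2 (act (1, inverse h) x))"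
   and B4: "\<forall>g h1 h2 x.
        Omega g h2 (act (1, inverse h1) x) * inverse (Omega g (h1 * h2) x) * Omega g h1 x
          = inverse (Phi h1 h2 x) * Phi h1 h2 (act (inverse g, 1) x)"
    using B unfolding is_B_data_def by blast+
  have wnz: "\<And>a b c. wG a b c \<noteq> 0" "\<And>a b c. wH a b c \<noteq> 0"
    using cG cH unfolding normalized_3cocycle_def by auto
  note S = N psimps gsimps act_comp[OF A] act_one[OF A]
  have coc: "Gamma_of act Psi Phi Omega u2 u3 (act (pinv u1) x) * inverse (Gamma_of act Psi Phi Omega (pmul u1 u2) u3 x)
     * Gamma_of act Psi Phi Omega u1 (pmul u2 u3) x * inverse (Gamma_of act Psi Phi Omega u1 u2 x)
     = inverse (omega_prod wG wH u1 u2 u3)" for u1 u2 u3 x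
  proof -
    obtain g1 h1 where u1: "u1 = (g1, h1)" by fastforce
    obtain g2 h2 where u2: "u2 = (g2, h2)" by fastforce
    obtain g3 h3 where u3: "u3 = (g3, h3)" by fastforce
    define y where "y = act (1, inverse h3 * (inverse h2 * inverse h1)) x"
    define z where "z = act (1, inverse h2 * inverse h1) x"
    define w where "w = act (1, inverse h1) x"
    have f1: "Psi g2 g3 (act (inverse g1, inverse h3 * (inverse h2 * inverse h1)) x)
       * inverse (Psi (g1 * g2) g3 y) * Psi g1 (g2 * g3) y * inverse (Psi g1 g2 y) = inverse (wG g1 g2 g3)"
      using spec[OF spec[OF spec[OF spec[OF B1, of g1], of g2], of g3], of y] unfolding y_def by (simp add: S)
    have f2: "Phi h2 h3 w * inverse (Phi (h1 * h2) h3 x) * Phi h1 (h2 * h3) x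
          * inverse (Phi h1 h2 x) = wH (inverse h3) (inverse h2) (inverse h1)"
      using spec[OF spec[OF spec[OF spec[OF B2, of h1], of h2], of h3], of x] unfolding w_def by (simp add: S)
    have f3: "Omega g2 h3 (act (inverse g1, inverse h2 * inverse h1) x) * inverse (Omega (g1 * g2) h3 z)
       * Omega g1 h3 z = Psi g1 g2 z * inverse (Psi g1 g2 y)"
      using spec[OF spec[OF spec[OF spec[OF B3, of g1], of g2], of h3], of z] unfolding z_def y_def by (simp add: S)
    have f4: "Omega g1 h3 z * inverse (Omega g1 (h2 * h3) w) * Omega g1 h2 w
          = inverse (Phi h2 h3 w) * Phi h2 h3 (act (inverse g1, inverse h1) x)"
      using spec[OF spec[OF spec[OF spec[OF B4, of g1], of h2], of h3], of w] unfolding z_def w_def by (simp add: S)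
    have g: "Gamma_of act Psi Phi Omega u2 u3 (act (pinv u1) x) * inverse (Gamma_of act Psi Phi Omega (pmul u1 u2) u3 x)
     * Gamma_of act Psi Phi Omega u1 (pmul u2 u3) x * inverse (Gamma_of act Psi Phi Omega u1 u2 x)
     = (Psi g2 g3 (act (inverse g1, inverse h3 * (inverse h2 * inverse h1)) x) * Phi h2 h3 (act (inverse g1, inverse h1) x)
        * Omega g2 h3 (act (inverse g1, inverse h2 * inverse h1) x))
       * inverse (Psi (g1 * g2) g3 y * Phi (h1 * h2) h3 x * Omega (g1 * g2) h3 z)
       * (Psi g1 (g2 * g3) y * Phi h1 (h2 * h3) x * Omega g1 (h2 * h3) w)
       * inverse (Psi g1 g2 z * Phi h1 h2 x * Omega g1 h2 w)"
      unfolding u1 u2 u3 Gamma_of_def y_def z_def w_def by (simp add: S)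
    have o: "inverse (omega_prod wG wH u1 u2 u3) = inverse (wG g1 g2 g3) * wH (inverse h3) (inverse h2) (inverse h1)"
      unfolding u1 u2 u3 omega_prod_def by (simp add: S)
    have q1: "Psi g1 g2 y \<noteq> 0" "Omega g1 h3 z \<noteq> 0" "Phi h2 h3 w \<noteq> 0" using nzs by auto
    have f1': "wG g1 g2 g3 * Psi g1 (g2 * g3) y * Psi g2 g3 (act (inverse g1, inverse h3 * (inverse h2 * inverse h1)) x)
       = Psi g1 g2 y * Psi (g1 * g2) g3 y" using f1 nzs wnz by (simp add: field_simps)
    have f2': "Phi h2 h3 w * Phi h1 (h2 * h3) x = Phi h1 h2 x * Phi (h1 * h2) h3 x * wH (inverse h3) (inverse h2) (inverse h1)"
      using f2 nzs wnz by (simp add: field_simps)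
    have f3': "Omega g1 h3 z * Psi g1 g2 y * Omega g2 h3 (act (inverse g1, inverse h2 * inverse h1) x)
       = Psi g1 g2 z * Omega (g1 * g2) h3 z" using f3 nzs wnz by (simp add: field_simps)
    have f4': "Omega g1 h2 w * Omega g1 h3 z * Phi h2 h3 w = Omega g1 (h2 * h3) w * Phi h2 h3 (act (inverse g1, inverse h1) x)"
      using f4 nzs wnz by (simp add: field_simps)
    note main = field_aux[OF f1' f2' f3' f4' q1]
    show ?thesis unfolding g o using main nzs wnz by (simp add: field_simps)
  qed
  show ?thesis unfolding is_M_data_def
    using coc nzs by (simp add: Gamma_of_def S)
qed

theorem proposition4p27:
  fixes wG :: "'g::mgroup \<Rightarrow> 'g \<Rightarrow> 'g \<Rightarrow> 'k::alg_closed_field"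
    and wH :: "'h::mgroup \<Rightarrow> 'h \<Rightarrow> 'h \<Rightarrow> 'k"
    and act :: "'g \<times> 'h \<Rightarrow> 'x \<Rightarrow> 'x"
  assumes "normalized_3cocycle wG"
    and "normalized_3cocycle wH"
    and "is_GH_set act"
  shows "(\<forall>Psi Phi Omega. is_B_data wG wH act Psi Phi Omega
            \<longrightarrow> is_M_data (omega_prod wG wH) act (Gamma_of act Psi Phi Omega))
       \<and> (\<forall>Gamma. is_M_data (omega_prod wG wH) act Gamma
            \<longrightarrow> is_B_data wG wH act (Psi_of Gamma) (Phi_of Gamma) (Omega_of Gamma))
       \<and> (\<forall>Psi Phi Omega. is_B_data wG wH act Psi Phi Omega
            \<longrightarrow> Psi_of (Gamma_of act Psi Phi Omega) = Psi
              \<and> Phi_of (Gamma_of act Psi Phi Omega) = Phi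
              \<and> Omega_of (Gamma_of act Psi Phi Omega) = Omega)
       \<and> (\<forall>Gamma. is_M_data (omega_prod wG wH) act Gamma
            \<longrightarrow> Gamma_of act (Psi_of Gamma) (Phi_of Gamma) (Omega_of Gamma) = Gamma)"
  using part1[OF assms] part2[OF assms] part3[OF assms(3)] part4[OF assms] by blast

end
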